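(* Let $A\in\{0,1\}^{n\times n}$, let $\mathcal{F}$ be the set of all compatible pairs $(n_1,n_2)$ for which $A$ admits an $(n_1,n_2)$ factorization, and let $\mathcal{L}=\{n_1:(n_1,n_2)\in\mathcal{F}\}$. Let $\mathfrak{l}_0<\mathfrak{l}_1<\dots<\mathfrak{l}_q$ be a branch of $\mathcal{L}$, and set $p_k=\mathfrak{l}_k/\mathfrak{l}_{k-1}$ for $k=1,\dots,q$ and $r=n/\mathfrak{l}_q$. Then $A$ admits an $(\mathfrak{l}_0,p_1,\dots,p_q,r)$ factorization, and this factorization is prime, i.e. every factor matrix in it is prime.
   Context: Kronecker products of binary matrices use Boolean arithmetic ($1+1=1$). An $(n_1,\dots,n_m)$ factorization of $A$ is $A=A_1\otimes\cdots\otimes A_m$ with $A_i\in\{0,1\}^{n_i\times n_i}$, $\prod n_i=n$. A compatible pair for $n$ is $(n_1,n_2)$ with $n_1,n_2$ positive divisors of $n$ different from $1$ and $n$ and $n_1n_2=n$. A matrix $X\in\{0,1\}^{m\times m}$ is decomposable if $X=X_1\otimes\cdots\otimes X_\ell$ for some $\ell>1$ and $X_i\in\{0,1\}^{m_i\times m_i}$ with $m_i>1$; it is prime if it is not decomposable. For a finite set $\mathcal{X}\subset\mathbb{N}$, $\overline{\mathcal{X}}$ denotes the set of elements of $\mathcal{X}$ that are not multiples of another element of $\mathcal{X}$. A branch of $\mathcal{L}$ is a sequence $\mathfrak{l}_0,\mathfrak{l}_1,\dots,\mathfrak{l}_q$ ($q\ge0$) constructed as follows: $\mathfrak{l}_0\in\overline{\mathcal{L}}$;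 for $k\ge1$, letting $\mathcal{M}_k$ be the set of elements of $\mathcal{L}$ that are multiples of $\mathfrak{l}_{k-1}$ other than $\mathfrak{l}_{k-1}$ itself, $\mathfrak{l}_k\in\overline{\mathcal{M}_k}$; the sequence stops at $\mathfrak{l}_q$ when $\mathcal{L}$ contains no multiple of $\mathfrak{l}_q$ other than $\mathfrak{l}_q$. *)

theory Defs
  imports Main
begin

text \<open>A binary matrix of size m is represented by a function bmat = nat => nat => bool,
  with only the entries i, j < m being meaningful (True = 1, False = 0).\<close>
type_synonym bmat = "nat \<Rightarrow> nat \<Rightarrow> bool"

definition mat_eq :: "nat \<Rightarrow> bmat \<Rightarrow> bmat \<Rightarrow> bool" where
  "mat_eq m X Y \<longleftrightarrow> (\<forall>i<m. \<forall>j<m. X i j = Y i j)"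

text \<open>Kronecker product X (x) Y where Y has size k (Boolean arithmetic; each entry
  of a Kronecker product is a single product, i.e. a conjunction).\<close>
definition kron :: "nat \<Rightarrow> bmat \<Rightarrow> bmat \<Rightarrow> bmat" where
  "kron k X Y = (\<lambda>i j. X (i div k) (j div k) \<and> Y (i mod k) (j mod k))"

fun kron_list :: "nat list \<Rightarrow> bmat list \<Rightarrow> bmat" where
  "kron_list (k # ks) (X # Xs) = kron (prod_list ks) X (kron_list ks Xs)"
| "kron_list _ _ = (\<lambda>i j. True)"

definition has_factorization :: "nat \<Rightarrow> bmat \<Rightarrow> nat list \<Rightarrow> bool" where
  "has_factorization n A ns \<longleftrightarrow> prod_list ns = n \<and>
     (\<exists>Xs. length Xs = length ns \<and> mat_eq n A (kron_list ns Xs))"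

definition decomposable :: "nat \<Rightarrow> bmat \<Rightarrow> bool" where
  "decomposable m X \<longleftrightarrow> (\<exists>ms Xs. length ms > 1 \<and> length Xs = length ms \<and>
     (\<forall>k\<in>set ms. k > 1) \<and> prod_list ms = m \<and> mat_eq m X (kron_list ms Xs))"

definition prime_mat :: "nat \<Rightarrow> bmat \<Rightarrow> bool" where
  "prime_mat m X \<longleftrightarrow> \<not> decomposable m X"

definition compatible_pair :: "nat \<Rightarrow> nat \<times> nat \<Rightarrow> bool" where
  "compatible_pair n p \<longleftrightarrow> (case p of (n1, n2) \<Rightarrow>
     n1 > 0 \<and> n2 > 0 \<and> n1 dvd n \<and> n2 dvd n \<and> n1 \<noteq> 1 \<and> n1 \<noteq> n \<and>
     n2 \<noteq> 1 \<and> n2 \<noteq> n \<and> n1 * n2 = n)"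

definition fact_pairs :: "nat \<Rightarrow> bmat \<Rightarrow> (nat \<times> nat) set" where
  "fact_pairs n A = {(n1, n2). compatible_pair n (n1, n2) \<and> has_factorization n A [n1, n2]}"

definition fact_L :: "nat \<Rightarrow> bmat \<Rightarrow> nat set" where
  "fact_L n A = {n1. \<exists>n2. (n1, n2) \<in> fact_pairs n A}"

definition dvd_minimal :: "nat set \<Rightarrow> nat set" where
  "dvd_minimal X = {x \<in> X. \<not> (\<exists>y\<in>X. y \<noteq> x \<and> y dvd x)}"

text \<open>A branch l_0, ..., l_q of L, represented as the nonempty list [l_0, ..., l_q].\<close>
definition is_branch :: "nat set \<Rightarrow> nat list \<Rightarrow> bool" where
  "is_branch L ls \<longleftrightarrow> ls \<noteq> [] \<and> hd ls \<in> dvd_minimal L \<and>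
     (\<forall>k. 0 < k \<and> k < length ls \<longrightarrow>
        ls ! k \<in> dvd_minimal {x \<in> L. ls ! (k - 1) dvd x \<and> x \<noteq> ls ! (k - 1)}) \<and>
     \<not> (\<exists>x\<in>L. last ls dvd x \<and> x \<noteq> last ls)"

end

theory Submission
  imports Defs
begin

lemma kron_assoc: "kron c (kron b X Y) Z = kron (b*c) X (kron c Y Z)"
proof (intro ext)
  fix i j :: nat
  have a: "i div c div b = i div (b*c)" for i :: nat by (metis div_mult2_eq mult.commute)
  have m: "i mod (b*c) div c = i div c mod b" for i :: nat
  proof (cases "c = 0")
    case True then show ?thesis by simp
  next
    case False
    have "i mod (b*c) = c * (i div c mod b) + i mod c"
      by (metis mod_mult2_eq mult.commute)
    then show ?thesis using False by simp
  qed
  have mm: "i mod (b*c) mod c = i mod c" for i :: nat by (simp add: mod_mod_cancel)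
  show "kron c (kron b X Y) Z i j = kron (b*c) X (kron c Y Z) i j"
    unfolding kron_def a m mm by simp
qed

lemma kron_one_True: "kron 1 X (\<lambda>i j. True) = X" "kron (Suc 0) X (\<lambda>i j. True) = X"
  unfolding kron_def by simp_all

lemma mat_eq_trans: "mat_eq m X Y \<Longrightarrow> mat_eq m Y Z \<Longrightarrow> mat_eq m X Z"
  unfolding mat_eq_def by auto

lemma mat_eq_sym: "mat_eq m X Y \<Longrightarrow> mat_eq m Y X"
  unfolding mat_eq_def by auto

lemma cong_right: "mat_eq k V V' \<Longrightarrow> 0 < k \<Longrightarrow> mat_eq m (kron k K V) (kron k K V')"
  unfolding mat_eq_def kron_def by auto

lemma cong_left: "mat_eq a X X' \<Longrightarrow> m = a*k \<Longrightarrow> mat_eq m (kron k X W) (kron k X' W)"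
  unfolding mat_eq_def kron_def
  by (metis less_mult_imp_div_less mult.commute)

lemma key:
  assumes "mat_eq m Y (kron b X Z)" "mat_eq m Y (kron c X' Z')"
    "b = c*d" "m = b*e" "i0 < m" "j0 < m" "Y i0 j0"
  shows "mat_eq b Z (kron c (\<lambda>s t. X' ((i0 div b)*d + s) ((j0 div b)*d + t)) Z')"
  unfolding mat_eq_def
proof (intro allI impI)
  fix u v assume u: "u < b" and v: "v < b"
  have bpos: "0 < b" using u by simp
  have cpos: "0 < c" using bpos assms(3) by simp
  define I where "I = (i0 div b)*b + u"
  define J where "J = (j0 div b)*b + v"
  have "i0 div b < e" using assms(4,5) bpos by (simp add: div_less_iff_less_mult mult.commute)
  then have "i0 div b + 1 \<le> e" by simp
  then have "(i0 div b + 1)*b \<le> e*b" by (rule mult_le_mono1)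
  then have I: "I < m" unfolding I_def using u assms(4) by (simp add: algebra_simps)
  have "j0 div b < e" using assms(4,6) bpos by (simp add: div_less_iff_less_mult mult.commute)
  then have "j0 div b + 1 \<le> e" by simp
  then have "(j0 div b + 1)*b \<le> e*b" by (rule mult_le_mono1)
  then have J: "J < m" unfolding J_def using v assms(4) by (simp add: algebra_simps)
  have Idb: "I div b = i0 div b" "I mod b = u" unfolding I_def using u by auto
  have Jdb: "J div b = j0 div b" "J mod b = v" unfolding J_def using v by auto
  have Ie: "I = u + c * ((i0 div b)*d)" unfolding I_def assms(3) by (simp add: algebra_simps)
  have Je: "J = v + c * ((j0 div b)*d)" unfolding J_def assms(3) by (simp add: algebra_simps)
  have Idc: "I div c = (i0 div b)*d + u div c" "I mod c = u mod c"
    unfolding Ie using cpos by auto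
  have Jdc: "J div c = (j0 div b)*d + v div c" "J mod c = v mod c"
    unfolding Je using cpos by auto
  have X0: "X (i0 div b) (j0 div b)" using assms(1,5,6,7) unfolding mat_eq_def kron_def by auto
  have "Y I J = (X (i0 div b) (j0 div b) \<and> Z u v)"
    using assms(1) I J Idb Jdb unfolding mat_eq_def kron_def by auto
  moreover have "Y I J = (X' ((i0 div b)*d + u div c) ((j0 div b)*d + v div c) \<and> Z' (u mod c) (v mod c))"
    using assms(2) I J Idc Jdc unfolding mat_eq_def kron_def by auto
  ultimately show "Z u v = kron c (\<lambda>s t. X' ((i0 div b)*d + s) ((j0 div b)*d + t)) Z' u v"
    using X0 unfolding kron_def by simp
qed


fun ksizes :: "nat \<Rightarrow> nat list \<Rightarrow> nat list" where
  "ksizes m [] = [m]"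
| "ksizes m (b # bs) = (m div b) # ksizes b bs"

fun kchain :: "nat \<Rightarrow> nat list \<Rightarrow> bool" where
  "kchain m [] = True"
| "kchain m (b # bs) = (0 < b \<and> b dvd m \<and> kchain b bs)"

lemma kchain_dvd: "kchain b bs \<Longrightarrow> c \<in> set bs \<Longrightarrow> c dvd b"
  by (induction bs arbitrary: b) (auto intro: dvd_trans)

lemma prod_ksizes: "kchain m bs \<Longrightarrow> prod_list (ksizes m bs) = m"
  by (induction bs arbitrary: m) auto

lemma ksizes_pos: "kchain m bs \<Longrightarrow> 0 < m \<Longrightarrow> x \<in> set (ksizes m bs) \<Longrightarrow> 0 < x"
  by (induction bs arbitrary: m) (auto elim!: dvdE)

lemma length_ksizes: "length (ksizes m bs) = Suc (length bs)"
  by (induction bs arbitrary: m) auto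

lemma kron_list_False: "kron_list (k # ks) ((\<lambda>i j. False) # Xs) = (\<lambda>i j. False)"
  by (simp add: kron_def)

lemma main:
  "kchain m bs \<Longrightarrow> 0 < m \<Longrightarrow> (\<forall>b\<in>set bs. \<exists>X Z. mat_eq m Y (kron b X Z)) \<Longrightarrow>
   \<exists>Xs. length Xs = length (ksizes m bs) \<and> mat_eq m Y (kron_list (ksizes m bs) Xs)"
proof (induction bs arbitrary: m Y)
  case Nil
  show ?case by (rule exI[of _ "[Y]"]) (simp add: kron_def mat_eq_def)
next
  case (Cons b bs)
  show ?case
  proof (cases "\<exists>i0<m. \<exists>j0<m. Y i0 j0")
    case False
    show ?thesis
      apply (rule exI[of _ "replicate (length (ksizes m (b#bs))) (\<lambda>i j. False)"])
      using False by (simp add: kron_def mat_eq_def)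
  next
    case True
    then obtain i0 j0 where ij: "i0 < m" "j0 < m" "Y i0 j0" by blast
    have b: "0 < b" "b dvd m" "kchain b bs" using Cons.prems(1) by auto
    obtain X Z where XZ: "mat_eq m Y (kron b X Z)" using Cons.prems(3) by auto
    obtain e where e: "m = b * e" using b by (auto elim: dvdE)
    have "\<forall>c\<in>set bs. \<exists>X Z'. mat_eq b Z (kron c X Z')"
    proof
      fix c assume c: "c \<in> set bs"
      have "c dvd b" using kchain_dvd[OF b(3) c] .
      then obtain d where d: "b = c * d" by (auto elim: dvdE)
      obtain X' Z' where "mat_eq m Y (kron c X' Z')" using Cons.prems(3) c by auto
      from key[OF XZ this d e ij] show "\<exists>X Z'. mat_eq b Z (kron c X Z')" by blast
    qed
    from Cons.IH[OF b(3) b(1) this] obtain Zs where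
      Zs: "length Zs = length (ksizes b bs)" "mat_eq b Z (kron_list (ksizes b bs) Zs)" by blast
    have "mat_eq m Y (kron b X (kron_list (ksizes b bs) Zs))"
      using mat_eq_trans[OF XZ cong_right[OF Zs(2) b(1)]] .
    then show ?thesis
      by (intro exI[of _ "X # Zs"]) (simp add: Zs(1) prod_ksizes[OF b(3)])
  qed
qed


lemma kl_split: "length pre = length Pre \<Longrightarrow> pre \<noteq> [] \<Longrightarrow>
  kron_list (pre @ ys) (Pre @ Ys) = kron (prod_list ys) (kron_list pre Pre) (kron_list ys Ys)"
proof (induction pre arbitrary: Pre)
  case Nil then show ?case by simp
next
  case (Cons x pre)
  then obtain X Pre' where P: "Pre = X # Pre'" "length pre = length Pre'" by (cases Pre) auto
  show ?case
  proof (cases "pre = []")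
    case True then show ?thesis using P by (simp add: kron_one_True)
  next
    case False
    then show ?thesis using P Cons.IH[OF P(2) False] by (simp add: kron_assoc)
  qed
qed

lemma two_fact: "mat_eq n A (kron k X Y) \<Longrightarrow> n = a * k \<Longrightarrow> has_factorization n A [a, k]"
  unfolding has_factorization_def
  by (rule conjI, simp, rule exI[of _ "[X, Y]"], simp add: kron_one_True)

lemma L_fact:
  assumes "l \<in> fact_L n A"
  shows "\<exists>X Z. mat_eq n A (kron (n div l) X Z)" "l dvd n" "1 < l" "l < n" "0 < n"
proof -
  obtain n2 where c: "compatible_pair n (l, n2)" "has_factorization n A [l, n2]"
    using assms unfolding fact_L_def fact_pairs_def by auto
  from c(1) have h: "0 < l" "0 < n2" "l * n2 = n" "l \<noteq> 1" "n2 \<noteq> 1"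
    unfolding compatible_pair_def by auto
  then show "l dvd n" "1 < l" "0 < n" by auto
  show "l < n" using h by (metis One_nat_def less_one linorder_neqE_nat mult.right_neutral nat_mult_less_cancel_disj)
  from c(2) obtain Xs where Xs: "length Xs = length [l, n2]" "mat_eq n A (kron_list [l, n2] Xs)"
    unfolding has_factorization_def by blast
  then obtain X1 X2 where "Xs = [X1, X2]"
    using Xs(1) by (auto simp: length_Suc_conv numeral_2_eq_2)
  then have "mat_eq n A (kron n2 X1 X2)" using Xs by (simp add: kron_one_True)
  moreover have "n div l = n2" using h by auto
  ultimately show "\<exists>X Z. mat_eq n A (kron (n div l) X Z)" by auto
qed

lemma regroup:
  assumes H: "mat_eq n A (kron_list ns Xs)" and len: "length Xs = length ns"
    and i: "i < length ns" and pos: "\<forall>x\<in>set ns. 0 < x"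
    and D: "mat_eq (ns!i) (Xs!i) (kron R P Q)" and s: "ns!i = a*R" and a: "1 < a" and R: "1 < R"
    and n: "n = prod_list ns"
  shows "prod_list (take i ns) * a \<in> fact_L n A"
proof -
  define pre where "pre = take i ns"
  define Pre where "Pre = take i Xs"
  define post where "post = drop (Suc i) ns"
  define Post where "Post = drop (Suc i) Xs"
  define Pp where "Pp = prod_list post"
  define s where "s = ns!i"
  define Xi where "Xi = Xs!i"
  define W where "W = kron_list post Post"
  define V where "V = kron Pp Q W"
  have nsd: "ns = pre @ s # post" unfolding pre_def post_def s_def using i by (simp add: id_take_nth_drop)
  have Xsd: "Xs = Pre @ Xi # Post" unfolding Pre_def Post_def Xi_def using i len by (simp add: id_take_nth_drop)
  have lp: "length pre = length Pre" unfolding pre_def Pre_def using len by simp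
  have Pp: "0 < Pp" unfolding Pp_def post_def using pos
    by (metis in_set_dropD prod_list_zero_iff zero_less_iff_neq_zero)
  have sa: "s = a * R" using s s_def by simp
  have spos: "0 < s*Pp" using Pp sa a R by simp
  have klpost: "kron_list (s # post) (Xi # Post) = kron Pp Xi W" unfolding Pp_def W_def by simp
  have c1: "mat_eq (s*Pp) (kron Pp Xi W) (kron Pp (kron R P Q) W)"
    by (rule cong_left) (use D s_def Xi_def in auto)
  have as1: "kron Pp (kron R P Q) W = kron (R*Pp) P V" unfolding V_def by (simp add: kron_assoc)
  have nprod: "n = prod_list pre * s * Pp" using n unfolding nsd Pp_def by simp
  show ?thesis
  proof (cases "pre = []")
    case True
    have "mat_eq n A (kron Pp Xi W)" using H unfolding nsd Xsd using True lp klpost by simp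
    moreover have "n = s * Pp" using nprod True by simp
    ultimately have "mat_eq n A (kron (R*Pp) P V)" using c1 as1 mat_eq_trans by metis
    moreover have "n = a * (R*Pp)" using nprod True sa by simp
    ultimately have hf: "has_factorization n A [a, R*Pp]" by (rule two_fact)
    have cp: "compatible_pair n (a, R*Pp)" unfolding compatible_pair_def
      using nprod True sa a R Pp by auto
    show ?thesis using hf cp True unfolding fact_L_def fact_pairs_def pre_def by auto
  next
    case False
    define K where "K = kron_list pre Pre"
    have "kron_list ns Xs = kron (s*Pp) K (kron Pp Xi W)"
      unfolding nsd Xsd K_def using kl_split[OF lp False] klpost Pp_def by simp
    then have "mat_eq n A (kron (s*Pp) K (kron Pp Xi W))" using H by simp
    moreover have "mat_eq n (kron (s*Pp) K (kron Pp Xi W)) (kron (s*Pp) K (kron (R*Pp) P V))"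
      using cong_right[OF c1 spos] as1 by simp
    moreover have "kron (s*Pp) K (kron (R*Pp) P V) = kron (R*Pp) (kron a K P) V"
      using kron_assoc[of "R*Pp" a K P V] sa by (simp add: mult.assoc)
    ultimately have "mat_eq n A (kron (R*Pp) (kron a K P) V)" using mat_eq_trans by metis
    moreover have "n = (prod_list pre * a) * (R*Pp)" using nprod sa by (simp add: algebra_simps)
    ultimately have hf: "has_factorization n A [prod_list pre * a, R*Pp]" by (rule two_fact)
    have pp: "0 < prod_list pre" using pos unfolding nsd
      by (metis Un_iff prod_list_zero_iff set_append zero_less_iff_neq_zero)
    have "1 < prod_list pre * a" using pp a
      by (metis less_le_trans mult_le_mono1 nat_mult_1 One_nat_def Suc_leI)
    moreover have "1 < R * Pp" using R Pp
      by (metis less_le_trans mult_le_mono2 nat_mult_1_right One_nat_def Suc_leI)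
    ultimately have cp: "compatible_pair n (prod_list pre * a, R*Pp)" unfolding compatible_pair_def
      using nprod sa pp a R Pp by (auto simp: algebra_simps)
    show ?thesis using hf cp unfolding fact_L_def fact_pairs_def pre_def by auto
  qed
qed


fun dchain :: "nat \<Rightarrow> nat list \<Rightarrow> bool" where
  "dchain l' [] = True"
| "dchain l' (l # ls) = (l' dvd l \<and> dchain l ls)"

lemma dchain_nth: "(ls \<noteq> [] \<longrightarrow> l' dvd hd ls) \<Longrightarrow>
  (\<forall>k. 0 < k \<and> k < length ls \<longrightarrow> ls!(k-1) dvd ls!k) \<Longrightarrow> dchain l' ls"
proof (induction ls arbitrary: l')
  case Nil then show ?case by simp
next
  case (Cons l ls)
  have "dchain l ls"
  proof (rule Cons.IH)
    show "ls \<noteq> [] \<longrightarrow> l dvd hd ls"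
      using Cons.prems(2)[rule_format, of 1] by (cases ls) auto
    show "\<forall>k. 0 < k \<and> k < length ls \<longrightarrow> ls ! (k - 1) dvd ls ! k"
    proof (intro allI impI)
      fix k assume k: "0 < k \<and> k < length ls"
      then have "(l#ls)!(Suc k - 1) dvd (l#ls)!(Suc k)" using Cons.prems(2) by auto
      then show "ls ! (k - 1) dvd ls ! k" using k by (cases k) auto
    qed
  qed
  then show ?case using Cons.prems(1) by simp
qed

lemma kchain_map: "0 < n \<Longrightarrow> 0 < l' \<Longrightarrow> l' dvd n \<Longrightarrow> dchain l' ls \<Longrightarrow>
  (\<forall>l\<in>set ls. l dvd n \<and> 0 < l) \<Longrightarrow> kchain (n div l') (map (\<lambda>l. n div l) ls)"
proof (induction ls arbitrary: l')
  case Nil then show ?case by simp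
next
  case (Cons l ls)
  have l: "l dvd n" "0 < l" "l' dvd l" using Cons.prems by auto
  obtain e where e: "n = l * e" using l by (auto elim: dvdE)
  obtain d where d: "l = l' * d" using l by (auto elim: dvdE)
  have "0 < n div l" using l Cons.prems(1) by (simp add: div_greater_zero_iff dvd_imp_le)
  moreover have "n div l dvd n div l'" using e d Cons.prems(2) l(2) by simp
  moreover have "kchain (n div l) (map (\<lambda>l. n div l) ls)"
    using Cons.IH[of l] Cons.prems l by simp
  ultimately show ?case by simp
qed

lemma ksizes_map: "0 < n \<Longrightarrow> 0 < l' \<Longrightarrow> l' dvd n \<Longrightarrow> dchain l' ls \<Longrightarrow>
  (\<forall>l\<in>set ls. l dvd n \<and> 0 < l) \<Longrightarrow>
  ksizes (n div l') (map (\<lambda>l. n div l) ls) = map2 (div) ls (l' # ls) @ [n div last (l' # ls)]"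
proof (induction ls arbitrary: l')
  case Nil then show ?case by simp
next
  case (Cons l ls)
  have l: "l dvd n" "0 < l" "l' dvd l" using Cons.prems by auto
  obtain e where e: "n = l * e" using l by (auto elim: dvdE)
  obtain d where d: "l = l' * d" using l by (auto elim: dvdE)
  have "n div l' div (n div l) = l div l'" using e d Cons.prems(1,2) l(2) by simp
  moreover have "ksizes (n div l) (map (\<lambda>l. n div l) ls) = map2 (div) ls (l # ls) @ [n div last (l # ls)]"
    using Cons.IH[of l] Cons.prems l by simp
  ultimately show ?case by simp
qed


lemma prod_gt1: "(\<forall>k\<in>set xs. (1::nat) < k) \<Longrightarrow> xs \<noteq> [] \<Longrightarrow> 1 < prod_list xs"
proof (induction xs)
  case Nil then show ?case by simp
next
  case (Cons x xs)
  show ?case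
  proof (cases "xs = []")
    case True then show ?thesis using Cons.prems by simp
  next
    case False
    then have "1 < prod_list xs" using Cons by simp
    moreover have "1 < x" using Cons.prems by simp
    ultimately show ?thesis by (metis One_nat_def less_1_mult prod_list.Cons)
  qed
qed

theorem corollary3:
  fixes n :: nat and A :: bmat and ls :: "nat list"
  assumes "is_branch (fact_L n A) ls"
  defines "ns \<equiv> hd ls # map (\<lambda>k. ls ! k div ls ! (k - 1)) [1..<length ls] @ [n div last ls]"
  shows "has_factorization n A ns \<and>
    (\<exists>Xs. length Xs = length ns \<and> mat_eq n A (kron_list ns Xs) \<and>
          (\<forall>i<length ns. prime_mat (ns ! i) (Xs ! i)))"
proof -
  define L where "L = fact_L n A"
  have ne: "ls \<noteq> []" and hdm: "hd ls \<in> dvd_minimal L"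
    and stp: "\<And>k. 0 < k \<Longrightarrow> k < length ls \<Longrightarrow>
        ls ! k \<in> dvd_minimal {x \<in> L. ls ! (k - 1) dvd x \<and> x \<noteq> ls ! (k - 1)}"
    and trm: "\<not> (\<exists>x\<in>L. last ls dvd x \<and> x \<noteq> last ls)"
    using assms(1) unfolding is_branch_def L_def by auto
  have inL: "ls!k \<in> L" if "k < length ls" for k
  proof (cases "k = 0")
    case True then show ?thesis using hdm ne by (simp add: dvd_minimal_def hd_conv_nth)
  next
    case False then show ?thesis using stp[of k] that by (simp add: dvd_minimal_def)
  qed
  have setL: "l \<in> L" if "l \<in> set ls" for l using inL that by (metis in_set_conv_nth)
  have npos: "0 < n" using L_fact(5) setL[of "hd ls"] ne L_def by simp
  have lprop: "l dvd n \<and> 0 < l" if "l \<in> set ls" for l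
    using L_fact(2,3)[of l n A] setL[OF that] L_def by auto
  have dch: "dchain 1 ls"
    by (rule dchain_nth) (use stp in \<open>auto simp: dvd_minimal_def\<close>)
  define bs where "bs = map (\<lambda>l. n div l) ls"
  have kc: "kchain n bs" using kchain_map[of n 1 ls] npos dch lprop unfolding bs_def by simp
  have ks: "ksizes n bs = map2 (div) ls (1 # ls) @ [n div last ls]"
    using ksizes_map[of n 1 ls] npos dch lprop ne unfolding bs_def by simp
  have m2: "map2 (div) ls (1 # ls) = hd ls # map (\<lambda>k. ls ! k div ls ! (k - 1)) [1..<length ls]"
  proof (rule nth_equalityI)
    show "length (map2 (div) ls (1 # ls)) = length (hd ls # map (\<lambda>k. ls ! k div ls ! (k - 1)) [1..<length ls])"
      using ne by simp
    fix j assume "j < length (map2 (div) ls (1 # ls))"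
    then have j: "j < length ls" by simp
    show "map2 (div) ls (1 # ls) ! j = (hd ls # map (\<lambda>k. ls ! k div ls ! (k - 1)) [1..<length ls]) ! j"
      using j ne by (cases j) (auto simp: hd_conv_nth)
  qed
  have nsd: "ns = ksizes n bs" unfolding ns_def ks m2 by simp
  have prodn: "prod_list ns = n" unfolding nsd using prod_ksizes[OF kc] .
  have nspos: "\<forall>x\<in>set ns. 0 < x" unfolding nsd using ksizes_pos[OF kc npos] by blast
  have "\<forall>b\<in>set bs. \<exists>X Z. mat_eq n A (kron b X Z)"
    unfolding bs_def using L_fact(1) setL L_def by auto
  from main[OF kc npos this] obtain Xs where
    Xs: "length Xs = length ns" "mat_eq n A (kron_list ns Xs)" unfolding nsd by blast
  have nslen: "length ns = Suc (length ls)" using ne unfolding ns_def by simp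
  have ns0: "ns!0 = ls!0" using ne unfolding ns_def by (simp add: hd_conv_nth)
  have nsk: "ns!k = ls!k div ls!(k-1)" if "0 < k" "k < length ls" for k
    using that unfolding ns_def by (cases k) (auto simp: nth_append)
  have nsl: "ns!(length ls) = n div last ls" using ne unfolding ns_def
    by (cases "length ls") (auto simp: nth_append)
  have pref: "prod_list (take (Suc k) ns) = ls!k" if "k < length ls" for k
    using that
  proof (induction k)
    case 0 then show ?case using ns0 nslen by (simp add: take_Suc_conv_app_nth)
  next
    case (Suc k)
    have "prod_list (take (Suc (Suc k)) ns) = prod_list (take (Suc k) ns) * ns!(Suc k)"
      using Suc.prems nslen by (simp add: take_Suc_conv_app_nth)
    also have "\<dots> = ls!k * (ls!(Suc k) div ls!k)" using Suc nsk[of "Suc k"] by simp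
    also have "\<dots> = ls!(Suc k)"
      using stp[of "Suc k"] Suc.prems by (simp add: dvd_minimal_def)
    finally show ?case .
  qed
  have primes: "prime_mat (ns ! i) (Xs ! i)" if i: "i < length ns" for i
  proof (rule ccontr)
    assume "\<not> prime_mat (ns ! i) (Xs ! i)"
    then obtain ms Ys where ms: "length ms > 1" "length Ys = length ms" "\<forall>k\<in>set ms. k > 1"
      "prod_list ms = ns!i" "mat_eq (ns!i) (Xs!i) (kron_list ms Ys)"
      unfolding prime_mat_def decomposable_def by blast
    then obtain a ms' Y Ys' where d: "ms = a # ms'" "Ys = Y # Ys'" "ms' \<noteq> []"
      by (cases ms; cases Ys) auto
    define R where "R = prod_list ms'"
    have a: "1 < a" using ms(3) d by simp
    have R: "1 < R" unfolding R_def using prod_gt1[of ms'] ms(3) d(1,3) by simp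
    have D: "mat_eq (ns!i) (Xs!i) (kron R Y (kron_list ms' Ys'))"
      using ms(5) d unfolding R_def by simp
    have s: "ns!i = a*R" using ms(4) d unfolding R_def by simp
    have L': "prod_list (take i ns) * a \<in> L"
      using regroup[OF Xs(2) Xs(1) i nspos D s a R prodn[symmetric]] L_def by simp
    have aR: "a * R \<noteq> a" using a R by simp
    show False
    proof (cases "i = 0")
      case True
      then have "a \<in> L" using L' by simp
      moreover have "a dvd hd ls" using s ns0 True ne by (simp add: hd_conv_nth)
      moreover have "a \<noteq> hd ls" using s ns0 True ne aR by (simp add: hd_conv_nth)
      ultimately show False using hdm unfolding dvd_minimal_def by auto
    next
      case False
      then obtain k where k: "i = Suc k" by (cases i) auto
      have kl: "k < length ls" using i nslen k by simp
      define p where "p = ls!k"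
      have pp: "0 < p" unfolding p_def using lprop kl by simp
      have pt: "prod_list (take i ns) = p" unfolding k p_def using pref[OF kl] .
      show False
      proof (cases "i < length ls")
        case True
        have li: "ls!i \<in> dvd_minimal {x \<in> L. p dvd x \<and> x \<noteq> p}"
          using stp[of i] True k unfolding p_def by simp
        have pd: "p dvd ls!i" using li unfolding dvd_minimal_def by simp
        have "ls!i div p = a * R" using nsk[of i] True k s unfolding p_def by auto
        then have lieq: "ls!i = p * (a * R)" using pd by (metis dvd_mult_div_cancel)
        have "p * a \<in> {x \<in> L. p dvd x \<and> x \<noteq> p}" using L' pt a pp by simp
        moreover have "p * a dvd ls!i" using lieq by simp
        moreover have "p * a \<noteq> ls!i" using lieq aR pp by simp
        ultimately show False using li unfolding dvd_minimal_def by blast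
      next
        case False
        then have ii: "i = length ls" using i nslen by simp
        have "p = last ls" unfolding p_def using ii k ne last_conv_nth[OF ne] by (metis diff_Suc_1)
        then have "p * a \<in> L" "last ls dvd p * a" "p * a \<noteq> last ls"
          using L' pt a pp by auto
        then show False using trm by blast
      qed
    qed
  qed
  show ?thesis
    unfolding has_factorization_def using prodn Xs primes by blast
qed

end
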